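(* Assume the setting in the context (one-period case $T=1$). For every $P\in\mathcal{P}$, the set $$\Theta_P:=\big\{E^R[Y]:\ R\in\mathfrak{P}(\Omega_1),\ P\ll R\lll\mathcal{P},\ Y\in L^\infty(\mathcal{F}_1;\operatorname{Int}K_1^* )\big\}\subset\mathbb{R}^d$$ is convex and has nonempty interior.
   Context: $\Omega_1$ is a Polish space, $\mathcal{F}_1$ the universal completion of its Borel $\sigma$-field, $\mathfrak{P}(\Omega_1)$ the Borel probability measures on $\Omega_1$. $\mathcal{P}\subset\mathfrak{P}(\Omega_1)$ is a nonempty convex analytic set of probability measures (weak topology). $R\lll\mathcal{P}$ means $R\ll R'$ for some $R'\in\mathcal{P}$. $K_1:\Omega_1\to2^{\mathbb{R}^d}$ is a random set whose values are closed convex cones containing $\mathbb{R}^d_+$, Borel-measurable in the sense that $\{\omega:K_1(\omega)\cap O\ne\emptyset\}$ is Borel for every closed $O\subset\mathbb{R}^d$; $K_1^*(\omega):=\{y:\langle x,y\rangle\ge0\ \forall x\in K_1(\omega)\}$, and it is assumed that $K_1^*(\omega)\cap\partial\mathbb{R}^d_+=\{0\}$ and $\operatorname{Int}K_1^*(\omega)\neq\emptyset$ for all $\omega$. $L^\infty(\mathcal{F}_1;\operatorname{Int}K_1^* )$ denotes the set of uniformly bounded $\mathcal{F}_1$-measurable $Y:\Omega_1\to\mathbb{R}^d$ with $Y(\omega)\in\operatorname{Int}K_1^*(\omega)$ for all $\omega$. *)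

theory Defs
  imports "HOL-Probability.Probability"
begin

definition prob_measures :: "('a::polish_space) measure set" where
  "prob_measures = {\<mu>. sets \<mu> = sets (borel :: 'a measure) \<and> prob_space \<mu>}"

definition weak_topology :: "('a::polish_space) measure topology" where
  "weak_topology = subtopology
     (topology_generated_by
        {{\<mu>. (\<integral>x. f x \<partial>\<mu>) \<in> U} | (f :: 'a \<Rightarrow> real) U.
            continuous_on UNIV f \<and> bounded (range f) \<and> open U})
     prob_measures"

definition baire_space :: "(nat \<Rightarrow> nat) topology" where
  "baire_space = product_topology (\<lambda>_. discrete_topology (UNIV :: nat set)) UNIV"

definition analytic_measures :: "('a::polish_space) measure set \<Rightarrow> bool" where
  "analytic_measures A \<longleftrightarrow> A \<subseteq> prob_measures \<and>
     (A = {} \<or> (\<exists>f. continuous_map baire_space weak_topology f \<and> f ` topspace baire_space = A))"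

definition mix_measure :: "real \<Rightarrow> ('a::polish_space) measure \<Rightarrow> 'a measure \<Rightarrow> 'a measure" where
  "mix_measure l \<mu> \<nu> = measure_of UNIV (sets (borel :: 'a measure))
      (\<lambda>A. ennreal l * emeasure \<mu> A + ennreal (1 - l) * emeasure \<nu> A)"

definition convex_measures :: "('a::polish_space) measure set \<Rightarrow> bool" where
  "convex_measures A \<longleftrightarrow> (\<forall>\<mu>\<in>A. \<forall>\<nu>\<in>A. \<forall>l\<in>{0..1}. mix_measure l \<mu> \<nu> \<in> A)"

text \<open>R is dominated by the family: R << R' for some R' in the family.\<close>
definition dominated_by :: "'a measure \<Rightarrow> 'a measure set \<Rightarrow> bool" where
  "dominated_by R \<P> \<longleftrightarrow> (\<exists>R'\<in>\<P>. absolutely_continuous R' R)"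

definition univ_sets :: "('a::polish_space) set set" where
  "univ_sets = (\<Inter>\<mu>\<in>prob_measures. sets (completion \<mu>))"

definition univ_measurable :: "(('a::polish_space) \<Rightarrow> 'b::topological_space) \<Rightarrow> bool" where
  "univ_measurable Y \<longleftrightarrow> (\<forall>B\<in>sets (borel :: 'b measure). Y -` B \<in> univ_sets)"

definition nonneg_orthant :: "(real ^ 'd) set" where
  "nonneg_orthant = {x. \<forall>i. 0 \<le> x $ i}"

definition dual_cone :: "(real ^ 'd) set \<Rightarrow> (real ^ 'd) set" where
  "dual_cone K = {y. \<forall>x\<in>K. 0 \<le> inner x y}"

definition borel_random_set :: "(('a::polish_space) \<Rightarrow> (real ^ 'd) set) \<Rightarrow> bool" where
  "borel_random_set K \<longleftrightarrow>
     (\<forall>C. closed C \<longrightarrow> {\<omega>. K \<omega> \<inter> C \<noteq> {}} \<in> sets (borel :: 'a measure))"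

definition Linf_int_dual :: "(('a::polish_space) \<Rightarrow> (real ^ 'd) set) \<Rightarrow> ('a \<Rightarrow> real ^ 'd) set" where
  "Linf_int_dual K = {Y. univ_measurable Y \<and> bounded (range Y) \<and>
                         (\<forall>\<omega>. Y \<omega> \<in> interior (dual_cone (K \<omega>)))}"

text \<open>The set Theta_P; E^R[Y] is the integral w.r.t. the completion of R
  (the extension of R to the universally completed sigma-field).\<close>
definition Theta :: "('a::polish_space) measure set \<Rightarrow> ('a \<Rightarrow> (real ^ 'd) set) \<Rightarrow> 'a measure
                      \<Rightarrow> (real ^ 'd) set" where
  "Theta \<P> K P = {integral\<^sup>L (completion R) Y | R Y.
      R \<in> prob_measures \<and> absolutely_continuous R P \<and> dominated_by R \<P> \<and> Y \<in> Linf_int_dual K}"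

end

theory Submission
  imports Defs
begin

lemma prob_measures_space:
  assumes "\<mu> \<in> prob_measures" shows "space \<mu> = UNIV"
  using assms unfolding prob_measures_def
  by (metis (mono_tags, lifting) mem_Collect_eq sets_eq_imp_space_eq space_borel)

lemma univ_measurable_iff:
  "univ_measurable (Y :: 'a::polish_space \<Rightarrow> 'b::topological_space) \<longleftrightarrow>
     (\<forall>\<mu>\<in>prob_measures. Y \<in> borel_measurable (completion \<mu>))"
proof
  assume u: "univ_measurable Y"
  show "\<forall>\<mu>\<in>prob_measures. Y \<in> borel_measurable (completion \<mu>)"
  proof
    fix \<mu> :: "'a measure" assume m: "\<mu> \<in> prob_measures"
    show "Y \<in> borel_measurable (completion \<mu>)"
      unfolding measurable_def
    proof (safe)
      fix B :: "'b set" assume "B \<in> sets borel"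
      hence "Y -` B \<in> univ_sets" using u unfolding univ_measurable_def by blast
      hence "Y -` B \<in> sets (completion \<mu>)" using m unfolding univ_sets_def by blast
      thus "Y -` B \<inter> space (completion \<mu>) \<in> sets (completion \<mu>)"
        using prob_measures_space[OF m] by simp
    qed (auto simp: prob_measures_space[OF m])
  qed
next
  assume a: "\<forall>\<mu>\<in>prob_measures. Y \<in> borel_measurable (completion \<mu>)"
  show "univ_measurable Y" unfolding univ_measurable_def univ_sets_def
  proof (intro ballI INT_I)
    fix B :: "'b set" and \<mu> :: "'a measure" assume B: "B \<in> sets borel" and m: "\<mu> \<in> prob_measures"
    have "Y -` B \<inter> space (completion \<mu>) \<in> sets (completion \<mu>)"
      using a m B measurable_sets by blast
    thus "Y -` B \<in> sets (completion \<mu>)" using prob_measures_space[OF m] by simp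
  qed
qed

lemma ae_borel_rep:
  fixes Y :: "'a \<Rightarrow> 'b::euclidean_space"
  assumes Y: "Y \<in> borel_measurable (completion M)"
  shows "\<exists>g\<in>borel_measurable M. AE x in M. Y x = g x"
proof -
  have "\<forall>i\<in>Basis. \<exists>g\<in>borel_measurable M. AE x in M. Y x \<bullet> i = g x"
  proof
    fix i :: 'b assume "i \<in> Basis"
    have "(\<lambda>x. Y x \<bullet> i) \<in> borel_measurable (completion M)" using Y by measurable
    thus "\<exists>g\<in>borel_measurable M. AE x in M. Y x \<bullet> i = g x"
      by (rule completion_ex_borel_measurable_real)
  qed
  then obtain g where g: "\<And>i. i \<in> Basis \<Longrightarrow> g i \<in> borel_measurable M"
    "\<And>i. i \<in> Basis \<Longrightarrow> AE x in M. Y x \<bullet> i = g i x"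
    by metis
  define h where "h x = (\<Sum>i\<in>Basis. g i x *\<^sub>R i)" for x
  have "h \<in> borel_measurable M" unfolding h_def using g(1) by measurable
  moreover have "AE x in M. \<forall>i\<in>Basis. Y x \<bullet> i = g i x"
    by (rule AE_finite_allI) (auto intro: g(2))
  hence "AE x in M. Y x = h x"
  proof (rule AE_mp, intro AE_I2 impI)
    fix x assume "\<forall>i\<in>Basis. Y x \<bullet> i = g i x"
    thus "Y x = h x" unfolding h_def by (metis (no_types, lifting) euclidean_representation sum.cong)
  qed
  ultimately show ?thesis by blast
qed

lemma mix_sets: "sets (mix_measure l \<mu> \<nu>) = sets (borel :: 'a::polish_space measure)"
  unfolding mix_measure_def
  by (metis sets.sets_measure_of_eq space_borel)

lemma mix_emeasure:
  assumes m: "\<mu> \<in> prob_measures" "\<nu> \<in> prob_measures" and A: "A \<in> sets (borel :: 'a::polish_space measure)"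
  shows "emeasure (mix_measure l \<mu> \<nu>) A = ennreal l * emeasure \<mu> A + ennreal (1 - l) * emeasure \<nu> A"
  unfolding mix_measure_def
proof (rule emeasure_measure_of_sigma[OF _ _ _ A])
  show "sigma_algebra UNIV (sets (borel :: 'a measure))"
    by (metis sets.sigma_algebra_axioms space_borel)
  show "positive (sets borel) (\<lambda>A. ennreal l * emeasure \<mu> A + ennreal (1 - l) * emeasure \<nu> A)"
    unfolding positive_def by simp
  have s: "sets \<mu> = sets borel" "sets \<nu> = sets borel" using m unfolding prob_measures_def by auto
  show "countably_additive (sets borel) (\<lambda>A. ennreal l * emeasure \<mu> A + ennreal (1 - l) * emeasure \<nu> A)"
    unfolding countably_additive_def
  proof (intro allI impI)
    fix F :: "nat \<Rightarrow> 'a set" assume F: "range F \<subseteq> sets borel" "disjoint_family F" "\<Union> (range F) \<in> sets borel"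
    have "(\<Sum>i. ennreal l * emeasure \<mu> (F i) + ennreal (1 - l) * emeasure \<nu> (F i))
        = (\<Sum>i. ennreal l * emeasure \<mu> (F i)) + (\<Sum>i. ennreal (1 - l) * emeasure \<nu> (F i))"
      by (rule suminf_add[symmetric]) auto
    also have "\<dots> = ennreal l * (\<Sum>i. emeasure \<mu> (F i)) + ennreal (1 - l) * (\<Sum>i. emeasure \<nu> (F i))"
      by (simp add: ennreal_suminf_cmult)
    also have "\<dots> = ennreal l * emeasure \<mu> (\<Union> (range F)) + ennreal (1 - l) * emeasure \<nu> (\<Union> (range F))"
      using F s by (simp add: suminf_emeasure)
    finally show "(\<Sum>i. ennreal l * emeasure \<mu> (F i) + ennreal (1 - l) * emeasure \<nu> (F i)) =
         ennreal l * emeasure \<mu> (\<Union> (range F)) + ennreal (1 - l) * emeasure \<nu> (\<Union> (range F))" .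
  qed
qed

lemma mix_prob:
  assumes m: "\<mu> \<in> prob_measures" "\<nu> \<in> prob_measures" and l: "0 \<le> l" "l \<le> 1"
  shows "mix_measure l \<mu> \<nu> \<in> prob_measures"
proof -
  have sp: "space (mix_measure l \<mu> \<nu>) = UNIV"
    by (metis mix_sets sets_eq_imp_space_eq space_borel)
  have "emeasure (mix_measure l \<mu> \<nu>) UNIV = ennreal l * emeasure \<mu> UNIV + ennreal (1 - l) * emeasure \<nu> UNIV"
    by (rule mix_emeasure[OF m]) (metis sets.top space_borel)
  also have "emeasure \<mu> UNIV = 1" using m(1) unfolding prob_measures_def
    by (metis (mono_tags, lifting) mem_Collect_eq prob_space.emeasure_space_1 sets_eq_imp_space_eq space_borel)
  also have "emeasure \<nu> UNIV = 1" using m(2) unfolding prob_measures_def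
    by (metis (mono_tags, lifting) mem_Collect_eq prob_space.emeasure_space_1 sets_eq_imp_space_eq space_borel)
  finally have "emeasure (mix_measure l \<mu> \<nu>) UNIV = 1"
    using l by (simp add: ennreal_plus[symmetric] del: ennreal_plus)
  hence "prob_space (mix_measure l \<mu> \<nu>)" using sp by (intro prob_spaceI) simp
  thus ?thesis unfolding prob_measures_def using mix_sets by blast
qed

lemma convex_dual_cone: "convex (dual_cone K)"
  unfolding convex_def dual_cone_def
  by (auto simp: inner_add_right intro!: add_nonneg_nonneg mult_nonneg_nonneg)

lemma rep_integral:
  fixes Y g :: "'a::polish_space \<Rightarrow> 'b::euclidean_space"
  assumes R: "R \<in> prob_measures" and Y: "univ_measurable Y"
    and g: "g \<in> borel_measurable R" and ae: "AE x in R. Y x = g x"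
  shows "integral\<^sup>L (completion R) Y = integral\<^sup>L R g"
proof -
  have "Y \<in> borel_measurable (completion R)" using Y R univ_measurable_iff by blast
  hence "integral\<^sup>L (completion R) Y = integral\<^sup>L (completion R) g"
    by (intro integral_cong_AE) (auto intro: measurable_completion g AE_completion ae)
  also have "\<dots> = integral\<^sup>L R g" by (rule integral_completion[OF g])
  finally show ?thesis .
qed

lemma core_mix:
  fixes K :: "'a::polish_space \<Rightarrow> (real ^ 'd) set"
  assumes R1: "R1 \<in> prob_measures" and R2: "R2 \<in> prob_measures"
    and Y1: "Y1 \<in> Linf_int_dual K" and Y2: "Y2 \<in> Linf_int_dual K"
    and u: "0 < u" "u < 1"
  shows "\<exists>Y\<in>Linf_int_dual K. integral\<^sup>L (completion (mix_measure u R1 R2)) Y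
           = u *\<^sub>R integral\<^sup>L (completion R1) Y1 + (1 - u) *\<^sub>R integral\<^sup>L (completion R2) Y2"
proof -
  define R where "R = mix_measure u R1 R2"
  define v where "v = 1 - u"
  have v: "0 < v" "u + v = 1" using u by (auto simp: v_def)
  have R: "R \<in> prob_measures" unfolding R_def using mix_prob[OF R1 R2] u by simp
  have sR: "sets R = sets borel" by (simp add: R_def mix_sets)
  have s1: "sets R1 = sets borel" and s2: "sets R2 = sets borel"
    using R1 R2 unfolding prob_measures_def by auto
  interpret R: prob_space R using R unfolding prob_measures_def by auto
  interpret R1: prob_space R1 using R1 unfolding prob_measures_def by auto
  interpret R2: prob_space R2 using R2 unfolding prob_measures_def by auto
  have emR: "emeasure R A = ennreal u * emeasure R1 A + ennreal v * emeasure R2 A" if "A \<in> sets borel" for A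
    unfolding R_def v_def by (rule mix_emeasure[OF R1 R2 that])
  have ac1: "absolutely_continuous R R1"
    unfolding absolutely_continuous_def
  proof
    fix A assume "A \<in> null_sets R"
    hence A: "A \<in> sets borel" "emeasure R A = 0" using sR by auto
    hence "ennreal u * emeasure R1 A = 0" using emR[OF A(1)] by simp
    thus "A \<in> null_sets R1" using u A s1 by (auto simp: null_sets_def)
  qed
  have ac2: "absolutely_continuous R R2"
    unfolding absolutely_continuous_def
  proof
    fix A assume "A \<in> null_sets R"
    hence A: "A \<in> sets borel" "emeasure R A = 0" using sR by auto
    hence "ennreal v * emeasure R2 A = 0" using emR[OF A(1)] by simp
    thus "A \<in> null_sets R2" using v A s2 by (auto simp: null_sets_def)
  qed
  define f1 where "f1 = RN_deriv R R1"
  define f2 where "f2 = RN_deriv R R2"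
  have f1m[measurable]: "f1 \<in> borel_measurable R" and f2m[measurable]: "f2 \<in> borel_measurable R"
    unfolding f1_def f2_def by auto
  have d1: "density R f1 = R1" unfolding f1_def using ac1 s1 sR by (intro R.density_RN_deriv) auto
  have d2: "density R f2 = R2" unfolding f2_def using ac2 s2 sR by (intro R.density_RN_deriv) auto
  have fin1: "AE x in R. f1 x \<noteq> \<infinity>" unfolding f1_def
    using ac1 s1 sR by (intro R.RN_deriv_finite) (auto simp: R1.sigma_finite_measure_axioms)
  have fin2: "AE x in R. f2 x \<noteq> \<infinity>" unfolding f2_def
    using ac2 s2 sR by (intro R.RN_deriv_finite) (auto simp: R2.sigma_finite_measure_axioms)
  define h1 where "h1 x = enn2real (f1 x)" for x
  define h2 where "h2 x = enn2real (f2 x)" for x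
  have h1m[measurable]: "h1 \<in> borel_measurable R" and h2m[measurable]: "h2 \<in> borel_measurable R"
    unfolding h1_def h2_def by auto
  have h1nn: "0 \<le> h1 x" and h2nn: "0 \<le> h2 x" for x by (auto simp: h1_def h2_def)
  have dh1: "density R (\<lambda>x. ennreal (h1 x)) = R1"
  proof -
    have "density R (\<lambda>x. ennreal (h1 x)) = density R f1"
      by (rule density_cong) (use fin1 in \<open>auto simp: h1_def less_top\<close>)
    thus ?thesis using d1 by simp
  qed
  have dh2: "density R (\<lambda>x. ennreal (h2 x)) = R2"
  proof -
    have "density R (\<lambda>x. ennreal (h2 x)) = density R f2"
      by (rule density_cong) (use fin2 in \<open>auto simp: h2_def less_top\<close>)
    thus ?thesis using d2 by simp
  qed
  have sum1: "AE x in R. u * h1 x + v * h2 x = 1"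
  proof -
    have eq: "density R (\<lambda>x. ennreal (u * h1 x + v * h2 x)) = density R (\<lambda>x. ennreal 1)"
    proof (rule measure_eqI)
      show "sets (density R (\<lambda>x. ennreal (u * h1 x + v * h2 x))) = sets (density R (\<lambda>x. ennreal 1))"
        by simp
    next
      fix A assume "A \<in> sets (density R (\<lambda>x. ennreal (u * h1 x + v * h2 x)))"
      hence A[measurable]: "A \<in> sets R" by simp
      have "emeasure (density R (\<lambda>x. ennreal (u * h1 x + v * h2 x))) A
          = (\<integral>\<^sup>+x. ennreal (u * h1 x + v * h2 x) * indicator A x \<partial>R)"
        by (rule emeasure_density) auto
      also have "\<dots> = (\<integral>\<^sup>+x. ennreal u * (ennreal (h1 x) * indicator A x)
                          + ennreal v * (ennreal (h2 x) * indicator A x) \<partial>R)"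
      proof (intro nn_integral_cong)
        fix x
        have "ennreal (u * h1 x + v * h2 x) = ennreal (u * h1 x) + ennreal (v * h2 x)"
          using u v h1nn h2nn by (intro ennreal_plus) auto
        also have "\<dots> = ennreal u * ennreal (h1 x) + ennreal v * ennreal (h2 x)"
          using u v h1nn h2nn by (simp add: ennreal_mult)
        finally show "ennreal (u * h1 x + v * h2 x) * indicator A x =
          ennreal u * (ennreal (h1 x) * indicator A x) + ennreal v * (ennreal (h2 x) * indicator A x)"
          by (auto split: split_indicator)
      qed
      also have "\<dots> = ennreal u * (\<integral>\<^sup>+x. ennreal (h1 x) * indicator A x \<partial>R)
                     + ennreal v * (\<integral>\<^sup>+x. ennreal (h2 x) * indicator A x \<partial>R)"
        by (simp add: nn_integral_add nn_integral_cmult)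
      also have "(\<integral>\<^sup>+x. ennreal (h1 x) * indicator A x \<partial>R) = emeasure R1 A"
        by (subst dh1[symmetric], subst emeasure_density) auto
      also have "(\<integral>\<^sup>+x. ennreal (h2 x) * indicator A x \<partial>R) = emeasure R2 A"
        by (subst dh2[symmetric], subst emeasure_density) auto
      also have "ennreal u * emeasure R1 A + ennreal v * emeasure R2 A = emeasure R A"
        using emR A sR by simp
      also have "\<dots> = emeasure (density R (\<lambda>x. ennreal 1)) A"
        by (simp add: density_1)
      finally show "emeasure (density R (\<lambda>x. ennreal (u * h1 x + v * h2 x))) A
          = emeasure (density R (\<lambda>x. ennreal 1)) A" .
    qed
    have "AE x in R. ennreal (u * h1 x + v * h2 x) = ennreal 1"
      using eq by (subst (asm) R.density_unique_iff) auto
    thus ?thesis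
    proof eventually_elim
      fix x assume e: "ennreal (u * h1 x + v * h2 x) = ennreal 1"
      have "0 \<le> u * h1 x + v * h2 x" using u v h1nn h2nn by (intro add_nonneg_nonneg mult_nonneg_nonneg) auto
      with e show "u * h1 x + v * h2 x = 1" by (subst (asm) ennreal_inj) auto
    qed
  qed
  have Y1u: "univ_measurable Y1" and Y1b: "bounded (range Y1)"
    and Y1i: "\<And>\<omega>. Y1 \<omega> \<in> interior (dual_cone (K \<omega>))"
    using Y1 unfolding Linf_int_dual_def by auto
  have Y2u: "univ_measurable Y2" and Y2b: "bounded (range Y2)"
    and Y2i: "\<And>\<omega>. Y2 \<omega> \<in> interior (dual_cone (K \<omega>))"
    using Y2 unfolding Linf_int_dual_def by auto
  obtain B1 where B1: "\<And>x. norm (Y1 x) \<le> B1" using Y1b unfolding bounded_iff by auto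
  obtain B2 where B2: "\<And>x. norm (Y2 x) \<le> B2" using Y2b unfolding bounded_iff by auto
  have "Y1 \<in> borel_measurable (completion R)" using Y1u R univ_measurable_iff by blast
  then obtain g1 where g1m[measurable]: "g1 \<in> borel_measurable R" and g1e: "AE x in R. Y1 x = g1 x"
    using ae_borel_rep by blast
  have "Y2 \<in> borel_measurable (completion R)" using Y2u R univ_measurable_iff by blast
  then obtain g2 where g2m[measurable]: "g2 \<in> borel_measurable R" and g2e: "AE x in R. Y2 x = g2 x"
    using ae_borel_rep by blast
  have g1m1: "g1 \<in> borel_measurable R1" using g1m measurable_cong_sets[of R1 R borel borel] s1 sR by simp
  have g2m2: "g2 \<in> borel_measurable R2" using g2m measurable_cong_sets[of R2 R borel borel] s2 sR by simp
  have g1e1: "AE x in R1. Y1 x = g1 x" using absolutely_continuous_AE[OF _ ac1 g1e] s1 sR by simp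
  have g2e2: "AE x in R2. Y2 x = g2 x" using absolutely_continuous_AE[OF _ ac2 g2e] s2 sR by simp
  have I1: "integral\<^sup>L (completion R1) Y1 = integral\<^sup>L R (\<lambda>x. h1 x *\<^sub>R g1 x)"
  proof -
    have "integral\<^sup>L (completion R1) Y1 = integral\<^sup>L R1 g1" by (rule rep_integral[OF R1 Y1u g1m1 g1e1])
    also have "\<dots> = integral\<^sup>L (density R (\<lambda>x. ennreal (h1 x))) g1" using dh1 by simp
    also have "\<dots> = integral\<^sup>L R (\<lambda>x. h1 x *\<^sub>R g1 x)"
      by (rule integral_density) (auto simp: h1nn)
    finally show ?thesis .
  qed
  have I2: "integral\<^sup>L (completion R2) Y2 = integral\<^sup>L R (\<lambda>x. h2 x *\<^sub>R g2 x)"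
  proof -
    have "integral\<^sup>L (completion R2) Y2 = integral\<^sup>L R2 g2" by (rule rep_integral[OF R2 Y2u g2m2 g2e2])
    also have "\<dots> = integral\<^sup>L (density R (\<lambda>x. ennreal (h2 x))) g2" using dh2 by simp
    also have "\<dots> = integral\<^sup>L R (\<lambda>x. h2 x *\<^sub>R g2 x)"
      by (rule integral_density) (auto simp: h2nn)
    finally show ?thesis .
  qed
  have int1: "integrable R (\<lambda>x. h1 x *\<^sub>R g1 x)"
  proof -
    have "integrable R1 g1"
    proof (rule R1.integrable_const_bound[where B=B1])
      show "AE x in R1. norm (g1 x) \<le> B1" using g1e1 by eventually_elim (metis B1)
    qed (rule g1m1)
    hence "integrable (density R (\<lambda>x. ennreal (h1 x))) g1" using dh1 by simp
    thus ?thesis by (subst (asm) integrable_density) (auto simp: h1nn)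
  qed
  have int2: "integrable R (\<lambda>x. h2 x *\<^sub>R g2 x)"
  proof -
    have "integrable R2 g2"
    proof (rule R2.integrable_const_bound[where B=B2])
      show "AE x in R2. norm (g2 x) \<le> B2" using g2e2 by eventually_elim (metis B2)
    qed (rule g2m2)
    hence "integrable (density R (\<lambda>x. ennreal (h2 x))) g2" using dh2 by simp
    thus ?thesis by (subst (asm) integrable_density) (auto simp: h2nn)
  qed
  define w1 where "w1 x = (if u * h1 x + v * h2 x = 1 then u * h1 x else 1)" for x
  define w2 where "w2 x = 1 - w1 x" for x
  have w1m[measurable]: "w1 \<in> borel_measurable R" unfolding w1_def by measurable
  have w2m[measurable]: "w2 \<in> borel_measurable R" unfolding w2_def by measurable
  have w1r: "0 \<le> w1 x" "w1 x \<le> 1" for x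
    using u v h1nn[of x] h2nn[of x] unfolding w1_def
    by (auto intro: mult_nonneg_nonneg) (smt (verit) mult_nonneg_nonneg)
  define Y where "Y x = w1 x *\<^sub>R Y1 x + w2 x *\<^sub>R Y2 x" for x
  have YL: "Y \<in> Linf_int_dual K"
    unfolding Linf_int_dual_def
  proof (intro CollectI conjI allI)
    show "univ_measurable Y"
      unfolding univ_measurable_iff
    proof
      fix \<mu> :: "'a measure" assume m: "\<mu> \<in> prob_measures"
      have sm: "sets \<mu> = sets R" using m sR unfolding prob_measures_def by auto
      have mm: "borel_measurable \<mu> = borel_measurable R" by (rule measurable_cong_sets[OF sm refl])
      have "w1 \<in> borel_measurable \<mu>" "w2 \<in> borel_measurable \<mu>"
        using w1m w2m unfolding mm by blast+
      hence [measurable]: "w1 \<in> borel_measurable (completion \<mu>)" "w2 \<in> borel_measurable (completion \<mu>)"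
        by (auto intro: measurable_completion)
      have [measurable]: "Y1 \<in> borel_measurable (completion \<mu>)" "Y2 \<in> borel_measurable (completion \<mu>)"
        using Y1u Y2u m univ_measurable_iff by blast+
      show "Y \<in> borel_measurable (completion \<mu>)" unfolding Y_def by measurable
    qed
    show "bounded (range Y)" unfolding bounded_iff
    proof (intro exI ballI)
      fix y assume "y \<in> range Y"
      then obtain x where x: "y = Y x" by auto
      have "norm (Y x) \<le> norm (w1 x *\<^sub>R Y1 x) + norm (w2 x *\<^sub>R Y2 x)"
        unfolding Y_def by (rule norm_triangle_ineq)
      also have "\<dots> \<le> 1 * B1 + 1 * B2"
      proof -
        have a: "w1 x * norm (Y1 x) \<le> norm (Y1 x)"
          using w1r[of x] by (intro mult_left_le_one_le) auto
        have b: "(1 - w1 x) * norm (Y2 x) \<le> norm (Y2 x)"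
          using w1r[of x] by (intro mult_left_le_one_le) auto
        show ?thesis using a b B1[of x] B2[of x] w1r[of x] unfolding w2_def by simp
      qed
      finally show "norm y \<le> B1 + B2" using x by simp
    qed
    fix \<omega>
    show "Y \<omega> \<in> interior (dual_cone (K \<omega>))" unfolding Y_def
      by (rule convexD[OF convex_interior[OF convex_dual_cone] Y1i Y2i])
         (use w1r[of \<omega>] in \<open>auto simp: w2_def\<close>)
  qed
  have "integral\<^sup>L (completion R) Y = integral\<^sup>L R (\<lambda>x. u *\<^sub>R (h1 x *\<^sub>R g1 x) + v *\<^sub>R (h2 x *\<^sub>R g2 x))"
  proof (rule rep_integral[OF R])
    show "univ_measurable Y" using YL unfolding Linf_int_dual_def by auto
    show "(\<lambda>x. u *\<^sub>R (h1 x *\<^sub>R g1 x) + v *\<^sub>R (h2 x *\<^sub>R g2 x)) \<in> borel_measurable R" by measurable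
    show "AE x in R. Y x = u *\<^sub>R (h1 x *\<^sub>R g1 x) + v *\<^sub>R (h2 x *\<^sub>R g2 x)"
      using sum1 g1e g2e
    proof eventually_elim
      case (elim x)
      hence "w1 x = u * h1 x" "w2 x = v * h2 x" unfolding w2_def w1_def by auto
      thus ?case using elim unfolding Y_def by simp
    qed
  qed
  also have "\<dots> = u *\<^sub>R integral\<^sup>L R (\<lambda>x. h1 x *\<^sub>R g1 x) + v *\<^sub>R integral\<^sup>L R (\<lambda>x. h2 x *\<^sub>R g2 x)"
    by (simp only: Bochner_Integration.integral_add[OF integrable_scaleR_right[OF int1] integrable_scaleR_right[OF int2]]
          Bochner_Integration.integral_scaleR_right)
  finally show ?thesis using YL I1 I2 unfolding R_def v_def by auto
qed

lemma mix_null: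
  assumes m: "\<mu> \<in> prob_measures" "\<nu> \<in> prob_measures" and l: "0 < l" "l < 1"
  shows "A \<in> null_sets (mix_measure l \<mu> \<nu>) \<longleftrightarrow> A \<in> null_sets \<mu> \<and> A \<in> null_sets \<nu>"
proof -
  have s: "sets \<mu> = sets borel" "sets \<nu> = sets borel" using m unfolding prob_measures_def by auto
  show ?thesis
  proof (cases "A \<in> sets borel")
    case True
    have "emeasure (mix_measure l \<mu> \<nu>) A = ennreal l * emeasure \<mu> A + ennreal (1 - l) * emeasure \<nu> A"
      by (rule mix_emeasure[OF m True])
    thus ?thesis using True s l by (auto simp: null_sets_def mix_sets)
  next
    case False
    thus ?thesis using s by (auto simp: null_sets_def mix_sets)
  qed
qed

lemma theta_convex:
  assumes Pc: "convex_measures \<P>" and Pp: "\<P> \<subseteq> prob_measures"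
  shows "convex (Theta \<P> K P)"
proof (rule convexI)
  fix x y and u v :: real
  assume x: "x \<in> Theta \<P> K P" and y: "y \<in> Theta \<P> K P" and u: "0 \<le> u" and v: "0 \<le> v" and uv: "u + v = 1"
  show "u *\<^sub>R x + v *\<^sub>R y \<in> Theta \<P> K P"
  proof (cases "u = 0 \<or> v = 0")
    case True
    thus ?thesis using x y uv by auto
  next
    case False
    hence u': "0 < u" "u < 1" and vd: "v = 1 - u" using u v uv by auto
    obtain R1 Y1 where 1: "x = integral\<^sup>L (completion R1) Y1" "R1 \<in> prob_measures"
      "absolutely_continuous R1 P" "dominated_by R1 \<P>" "Y1 \<in> Linf_int_dual K"
      using x unfolding Theta_def by blast
    obtain R2 Y2 where 2: "y = integral\<^sup>L (completion R2) Y2" "R2 \<in> prob_measures"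
      "absolutely_continuous R2 P" "dominated_by R2 \<P>" "Y2 \<in> Linf_int_dual K"
      using y unfolding Theta_def by blast
    obtain Y where Y: "Y \<in> Linf_int_dual K" and YI: "integral\<^sup>L (completion (mix_measure u R1 R2)) Y
           = u *\<^sub>R integral\<^sup>L (completion R1) Y1 + (1 - u) *\<^sub>R integral\<^sup>L (completion R2) Y2"
      using core_mix[OF 1(2) 2(2) 1(5) 2(5) u'] by blast
    define R where "R = mix_measure u R1 R2"
    have Rp: "R \<in> prob_measures" unfolding R_def using mix_prob[OF 1(2) 2(2)] u' by simp
    have acP: "absolutely_continuous R P"
      using 1(3) mix_null[OF 1(2) 2(2) u'] unfolding absolutely_continuous_def R_def by blast
    obtain R1' where R1': "R1' \<in> \<P>" "absolutely_continuous R1' R1" using 1(4) unfolding dominated_by_def by blast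
    obtain R2' where R2': "R2' \<in> \<P>" "absolutely_continuous R2' R2" using 2(4) unfolding dominated_by_def by blast
    have "mix_measure u R1' R2' \<in> \<P>" using Pc R1'(1) R2'(1) u' unfolding convex_measures_def by auto
    moreover have "absolutely_continuous (mix_measure u R1' R2') R"
      using R1'(2) R2'(2) mix_null[OF 1(2) 2(2) u'] mix_null[of R1' R2' u] R1'(1) R2'(1) Pp u'
      unfolding absolutely_continuous_def R_def by blast
    ultimately have "dominated_by R \<P>" unfolding dominated_by_def by blast
    hence "\<exists>R Y'. u *\<^sub>R x + v *\<^sub>R y = integral\<^sup>L (completion R) Y' \<and> R \<in> prob_measures \<and>
       absolutely_continuous R P \<and> dominated_by R \<P> \<and> Y' \<in> Linf_int_dual K"
      using Rp acP Y YI 1(1) 2(1) vd unfolding R_def by metis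
    thus ?thesis unfolding Theta_def by blast
  qed
qed

lemma dense_seq:
  obtains e :: "nat \<Rightarrow> 'b::{metric_space,second_countable_topology}"
  where "\<And>x \<epsilon>. \<epsilon> > 0 \<Longrightarrow> \<exists>i. dist (e i) x < \<epsilon>"
proof -
  obtain D :: "'b set" where "countable D" and D: "\<And>X. open X \<Longrightarrow> X \<noteq> {} \<Longrightarrow> \<exists>d\<in>D. d \<in> X"
    by (erule countable_dense_setE)
  have ne: "D \<noteq> {}" using D[of UNIV] by auto
  have "\<exists>i. dist (from_nat_into D i) x < \<epsilon>" if ep: "\<epsilon> > 0" for x \<epsilon>
  proof -
    obtain d where d: "d \<in> D" "d \<in> ball x \<epsilon>" using D[of "ball x \<epsilon>"] ep by auto
    then obtain i where "from_nat_into D i = d" using from_nat_into_surj[OF \<open>countable D\<close>] by metis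
    thus ?thesis using d by (auto simp: dist_commute)
  qed
  thus ?thesis using that by blast
qed

definition qq :: "(nat \<Rightarrow> 'b) \<Rightarrow> nat \<Rightarrow> 'b" where "qq e n = e (fst (prod_decode n))"
definition rr :: "nat \<Rightarrow> real" where "rr n = 1 / (real (snd (prod_decode n)) + 1)"

lemma rr_pos: "rr n > 0" by (simp add: rr_def)

lemma cover_seq:
  fixes e :: "nat \<Rightarrow> 'b::metric_space"
  assumes e: "\<And>x \<epsilon>. \<epsilon> > 0 \<Longrightarrow> \<exists>i. dist (e i) x < \<epsilon>" and eps: "\<epsilon> > 0"
  shows "\<exists>n. z \<in> cball (qq e n) (rr n) \<and> cball (qq e n) (rr n) \<subseteq> ball z \<epsilon>"
proof -
  have "\<epsilon> / 2 > 0" using eps by simp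
  then obtain m :: nat where m: "m > 0" "inverse (real m) < \<epsilon> / 2" using ex_inverse_of_nat_less by blast
  obtain i where i: "dist (e i) z < inverse (real m)" using e[of "inverse (real m)"] m by auto
  define n where "n = prod_encode (i, m - 1)"
  have qn: "qq e n = e i" and rn: "rr n = inverse (real m)"
  proof -
    have pd: "prod_decode n = (i, m - 1)" by (simp only: n_def prod_encode_inverse)
    show "qq e n = e i" by (simp only: qq_def pd fst_conv)
    have "real (m - 1) + 1 = real m" using m(1) by linarith
    hence "rr n = 1 / real m" by (simp only: rr_def pd snd_conv)
    thus "rr n = inverse (real m)" by (simp add: divide_inverse)
  qed
  have "z \<in> cball (qq e n) (rr n)" unfolding qn rn using i by (simp add: dist_commute)
  moreover have "cball (qq e n) (rr n) \<subseteq> ball z \<epsilon>"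
  proof
    fix y assume "y \<in> cball (qq e n) (rr n)"
    hence "dist (e i) y \<le> inverse (real m)" using qn rn by simp
    hence "dist z y < \<epsilon>" using i m(2) dist_triangle[of z y "e i"] dist_commute[of z "e i"] by linarith
    thus "y \<in> ball z \<epsilon>" by simp
  qed
  ultimately show ?thesis by blast
qed

lemma effros_open:
  fixes K :: "'a::polish_space \<Rightarrow> (real ^ 'd) set"
  assumes K: "borel_random_set K" and U: "open U"
  shows "{\<omega>. K \<omega> \<inter> U \<noteq> {}} \<in> sets (borel :: 'a measure)"
proof -
  obtain e :: "nat \<Rightarrow> real ^ 'd" where e: "\<And>x \<epsilon>. \<epsilon> > 0 \<Longrightarrow> \<exists>i. dist (e i) x < \<epsilon>"
    using dense_seq by blast
  define I where "I = {n. cball (qq e n) (rr n) \<subseteq> U}"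
  have UI: "U = (\<Union>n\<in>I. cball (qq e n) (rr n))"
  proof
    show "U \<subseteq> (\<Union>n\<in>I. cball (qq e n) (rr n))"
    proof
      fix z assume "z \<in> U"
      then obtain \<epsilon> where "\<epsilon> > 0" "ball z \<epsilon> \<subseteq> U" using U open_contains_ball by blast
      then obtain n where "z \<in> cball (qq e n) (rr n)" "cball (qq e n) (rr n) \<subseteq> ball z \<epsilon>"
        using cover_seq[OF e] by blast
      thus "z \<in> (\<Union>n\<in>I. cball (qq e n) (rr n))" using \<open>ball z \<epsilon> \<subseteq> U\<close> unfolding I_def by blast
    qed
  qed (auto simp: I_def)
  have "{\<omega>. K \<omega> \<inter> U \<noteq> {}} = (\<Union>n\<in>I. {\<omega>. K \<omega> \<inter> cball (qq e n) (rr n) \<noteq> {}})"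
    by (simp only: UI) blast
  also have "\<dots> \<in> sets borel"
    using K unfolding borel_random_set_def by (intro sets.countable_UN') auto
  finally show ?thesis .
qed

lemma cball_dual_iff:
  fixes q :: "real ^ 'd"
  assumes r: "r > 0"
  shows "cball q r \<subseteq> dual_cone C \<longleftrightarrow> C \<inter> {x. inner x q < r * norm x} = {}"
proof
  assume h: "cball q r \<subseteq> dual_cone C"
  show "C \<inter> {x. inner x q < r * norm x} = {}"
  proof (rule ccontr)
    assume "C \<inter> {x. inner x q < r * norm x} \<noteq> {}"
    then obtain x where x: "x \<in> C" "inner x q < r * norm x" by auto
    hence x0: "x \<noteq> 0" by auto
    define y where "y = q - (r / norm x) *\<^sub>R x"
    have "dist q y = r" using x0 r by (simp add: y_def dist_norm)
    hence "y \<in> dual_cone C" using h by auto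
    hence "0 \<le> inner x y" using x(1) unfolding dual_cone_def by auto
    moreover have "inner x y = inner x q - r * norm x"
      using x0 by (simp add: y_def inner_diff_right power2_norm_eq_inner[symmetric] power2_eq_square)
    ultimately show False using x(2) by simp
  qed
next
  assume h: "C \<inter> {x. inner x q < r * norm x} = {}"
  show "cball q r \<subseteq> dual_cone C"
    unfolding dual_cone_def
  proof (safe)
    fix y x assume y: "y \<in> cball q r" and x: "x \<in> C"
    have "inner x q \<ge> r * norm x" using h x by auto
    have "\<bar>inner x (y - q)\<bar> \<le> norm x * norm (y - q)" by (rule Cauchy_Schwarz_ineq2)
    also have "\<dots> \<le> norm x * r" using y by (intro mult_left_mono) (auto simp: dist_norm norm_minus_commute)
    finally have "inner x (y - q) \<ge> - (r * norm x)" by (simp add: mult.commute)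
    thus "0 \<le> inner x y" using \<open>inner x q \<ge> r * norm x\<close> by (simp add: inner_diff_right)
  qed
qed

lemma borel_univ:
  fixes f :: "'a::polish_space \<Rightarrow> 'b::topological_space"
  assumes "f \<in> borel_measurable borel" shows "univ_measurable f"
  unfolding univ_measurable_iff
proof
  fix \<mu> :: "'a measure" assume "\<mu> \<in> prob_measures"
  hence "sets \<mu> = sets borel" unfolding prob_measures_def by auto
  hence "borel_measurable \<mu> = (borel_measurable borel :: ('a \<Rightarrow> 'b) set)" by (rule measurable_cong_sets) simp
  thus "f \<in> borel_measurable (completion \<mu>)" using assms by (auto intro: measurable_completion)
qed

lemma dual_scale:
  assumes "y \<in> dual_cone C" "0 \<le> a" shows "a *\<^sub>R y \<in> dual_cone C"
  using assms unfolding dual_cone_def by auto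

lemma theta_interior:
  fixes K :: "'a::polish_space \<Rightarrow> (real ^ 'd) set"
  assumes PP: "P \<in> \<P>" "\<P> \<subseteq> prob_measures" and K: "borel_random_set K"
    and Kint: "\<And>\<omega>. interior (dual_cone (K \<omega>)) \<noteq> {}"
  shows "interior (Theta \<P> K P) \<noteq> {}"
proof -
  have Pp: "P \<in> prob_measures" using PP by auto
  have sP: "sets P = sets borel" using Pp unfolding prob_measures_def by auto
  interpret P: prob_space P using Pp unfolding prob_measures_def by auto
  have spP: "space P = UNIV" using prob_measures_space[OF Pp] .
  obtain e :: "nat \<Rightarrow> real ^ 'd" where e: "\<And>x \<epsilon>. \<epsilon> > 0 \<Longrightarrow> \<exists>i. dist (e i) x < \<epsilon>"
    using dense_seq by blast
  define q where "q n = qq e n" for n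
  define r where "r n = rr n" for n
  have r0: "r n > 0" for n by (simp add: r_def rr_pos)
  define s where "s n = 1 / (1 + norm (q n))" for n
  have s0: "s n > 0" for n unfolding s_def by (simp add: add_pos_nonneg)
  define c where "c n = s n *\<^sub>R q n" for n
  define \<rho> where "\<rho> n = s n * r n" for n
  have \<rho>0: "\<rho> n > 0" for n using s0 r0 by (simp add: \<rho>_def)
  have cb: "norm (c n) \<le> 1" for n
  proof -
    have "norm (c n) = norm (q n) / (1 + norm (q n))" by (simp add: c_def s_def)
    also have "\<dots> \<le> 1" by (simp add: divide_le_eq_1 add_pos_nonneg)
    finally show ?thesis .
  qed
  define B where "B n = {\<omega>. cball (q n) (r n) \<subseteq> dual_cone (K \<omega>)}" for n
  have Bm: "B n \<in> sets borel" for n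
  proof -
    have op: "open {x :: real ^ 'd. inner x (q n) < r n * norm x}"
      by (rule open_Collect_less; intro continuous_intros)
    have "B n = UNIV - {\<omega>. K \<omega> \<inter> {x. inner x (q n) < r n * norm x} \<noteq> {}}"
      unfolding B_def by (rule set_eqI) (simp only: mem_Collect_eq Diff_iff cball_dual_iff[OF r0] UNIV_I simp_thms)
    also have "\<dots> \<in> sets borel"
      using sets.compl_sets[OF effros_open[OF K op]] unfolding space_borel .
    finally show ?thesis .
  qed
  have cov: "\<exists>n. \<omega> \<in> B n" for \<omega>
  proof -
    obtain z where "z \<in> interior (dual_cone (K \<omega>))" using Kint by blast
    then obtain \<epsilon> where \<epsilon>: "\<epsilon> > 0" "ball z \<epsilon> \<subseteq> dual_cone (K \<omega>)" unfolding mem_interior by blast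
    then obtain n where "cball (qq e n) (rr n) \<subseteq> ball z \<epsilon>" using cover_seq[OF e, of \<epsilon> z] by blast
    hence "cball (q n) (r n) \<subseteq> dual_cone (K \<omega>)" using \<epsilon>(2) unfolding q_def r_def by (rule order_trans)
    hence "\<omega> \<in> B n" unfolding B_def by (rule CollectI)
    thus ?thesis by (rule exI)
  qed
  have cball_c: "cball (c n) (\<rho> n) \<subseteq> dual_cone (K \<omega>)" if "\<omega> \<in> B n" for n \<omega>
  proof
    fix y assume y: "y \<in> cball (c n) (\<rho> n)"
    have "dist (q n) ((1 / s n) *\<^sub>R y) = (1 / s n) * dist (c n) y"
    proof -
      have "q n - (1 / s n) *\<^sub>R y = (1 / s n) *\<^sub>R (c n - y)"
        using s0[of n] by (simp add: c_def scaleR_diff_right)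
      thus ?thesis using s0[of n] by (simp add: dist_norm)
    qed
    also have "\<dots> \<le> (1 / s n) * \<rho> n" using y s0[of n] by (intro mult_left_mono) auto
    also have "\<dots> = r n" using s0[of n] by (simp add: \<rho>_def)
    finally have "(1 / s n) *\<^sub>R y \<in> dual_cone (K \<omega>)" using that unfolding B_def by auto
    from dual_scale[OF this, of "s n"] show "y \<in> dual_cone (K \<omega>)" using s0[of n] by simp
  qed
  define N where "N \<omega> = (LEAST n. \<omega> \<in> B n)" for \<omega>
  have NB: "\<omega> \<in> B (N \<omega>)" for \<omega> unfolding N_def using cov by (rule LeastI_ex)
  have predB: "Measurable.pred borel (\<lambda>\<omega>. \<omega> \<in> B n)" for n
    unfolding pred_def using Bm by simp
  have Nm[measurable]: "N \<in> measurable borel (count_space UNIV)"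
    unfolding N_def by (rule measurable_Least) (rule predB)
  define Y where "Y \<omega> = c (N \<omega>)" for \<omega>
  have Ym: "Y \<in> borel_measurable borel" unfolding Y_def by measurable
  have mPeq: "borel_measurable P = (borel_measurable borel :: ('a \<Rightarrow> real ^ 'd) set)"
    by (rule measurable_cong_sets[OF sP refl])
  have YmP[measurable]: "Y \<in> borel_measurable P"
    using Ym unfolding mPeq .
  have Ynorm: "norm (Y \<omega>) \<le> 1" for \<omega> using cb by (simp add: Y_def)
  \<comment> \<open>a set of positive measure on which Y is constant\<close>
  obtain n0 where n0: "{\<omega>. N \<omega> = n0} \<notin> null_sets P"
  proof (rule ccontr)
    assume "\<not> thesis"
    hence "\<forall>n. {\<omega>. N \<omega> = n} \<in> null_sets P" using that by blast
    hence "(\<Union>n. {\<omega>. N \<omega> = n}) \<in> null_sets P" by blast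
    moreover have "(\<Union>n. {\<omega>. N \<omega> = n}) = space P" using spP by auto
    ultimately show False using P.emeasure_space_1 by auto
  qed
  define A where "A = {\<omega>. N \<omega> = n0}"
  have Am: "A \<in> sets P"
  proof -
    have "A = N -` {n0} \<inter> space borel" unfolding A_def by auto
    also have "\<dots> \<in> sets borel" using Nm by (rule measurable_sets) simp
    finally show ?thesis using sP by simp
  qed
  define p where "p = measure P A"
  have p0: "p > 0"
  proof -
    have "emeasure P A \<noteq> 0" using n0 Am unfolding A_def by auto
    thus ?thesis unfolding p_def using P.emeasure_eq_measure[of A]
      by (simp add: zero_less_measure_iff)
  qed
  have intY: "integrable P Y" by (rule P.integrable_const_bound[where B=1]) (auto simp: Ynorm)
  define E where "E = integral\<^sup>L P Y"
  have "ball E (p * \<rho> n0) \<subseteq> Theta \<P> K P"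
  proof
    fix z assume z: "z \<in> ball E (p * \<rho> n0)"
    define w where "w = (1 / p) *\<^sub>R (z - E)"
    have wn: "norm w < \<rho> n0"
    proof -
      have "norm (z - E) < p * \<rho> n0" using z by (simp add: dist_norm norm_minus_commute)
      moreover have "norm w = norm (z - E) / p" using p0 by (simp add: w_def)
      ultimately show ?thesis using p0 by (simp add: divide_less_eq mult.commute)
    qed
    define Y' where "Y' \<omega> = Y \<omega> + indicator A \<omega> *\<^sub>R w" for \<omega>
    have Am': "A \<in> sets borel" using Am sP by simp
    have Y'm: "Y' \<in> borel_measurable borel" unfolding Y'_def using Ym Am' by measurable
    have Y'mP: "Y' \<in> borel_measurable P"
      using Y'm unfolding mPeq .
    have Y'L: "Y' \<in> Linf_int_dual K"
      unfolding Linf_int_dual_def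
    proof (intro CollectI conjI allI)
      show "univ_measurable Y'" by (rule borel_univ[OF Y'm])
      show "bounded (range Y')" unfolding bounded_iff
      proof (intro exI ballI)
        fix y assume "y \<in> range Y'"
        then obtain \<omega> where y: "y = Y' \<omega>" by auto
        have "norm (Y' \<omega>) \<le> norm (Y \<omega>) + norm (indicator A \<omega> *\<^sub>R w)"
          unfolding Y'_def by (rule norm_triangle_ineq)
        also have "\<dots> \<le> 1 + norm w"
        proof -
          have "norm (indicator A \<omega> *\<^sub>R w) \<le> norm w" by (simp add: indicator_def)
          thus ?thesis using Ynorm[of \<omega>] by linarith
        qed
        finally show "norm y \<le> 1 + norm w" using y by simp
      qed
      fix \<omega>
      show "Y' \<omega> \<in> interior (dual_cone (K \<omega>))"
      proof (cases "\<omega> \<in> A")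
        case True
        hence N0: "N \<omega> = n0" unfolding A_def by simp
        have "Y' \<omega> \<in> ball (c n0) (\<rho> n0)"
          using True wn N0 by (simp add: Y'_def Y_def dist_norm)
        moreover have "ball (c n0) (\<rho> n0) \<subseteq> interior (dual_cone (K \<omega>))"
          using cball_c[of \<omega> n0] NB[of \<omega>] N0 by (intro interior_maximal) auto
        ultimately show ?thesis by blast
      next
        case False
        have "Y' \<omega> = c (N \<omega>)" using False by (simp add: Y'_def Y_def)
        moreover have "ball (c (N \<omega>)) (\<rho> (N \<omega>)) \<subseteq> interior (dual_cone (K \<omega>))"
          using cball_c[OF NB[of \<omega>]] by (intro interior_maximal) auto
        ultimately show ?thesis using \<rho>0 by auto
      qed
    qed
    have "integral\<^sup>L (completion P) Y' = integral\<^sup>L P Y'" by (rule integral_completion[OF Y'mP])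
    also have "\<dots> = integral\<^sup>L P Y + integral\<^sup>L P (\<lambda>\<omega>. indicator A \<omega> *\<^sub>R w)"
      unfolding Y'_def
    proof (rule Bochner_Integration.integral_add[OF intY])
      show "integrable P (\<lambda>\<omega>. indicator A \<omega> *\<^sub>R w)"
        using Am by (intro integrable_scaleR_left integrable_real_indicator) (auto simp: P.emeasure_eq_measure)
    qed
    also have "integral\<^sup>L P (\<lambda>\<omega>. indicator A \<omega> *\<^sub>R w) = p *\<^sub>R w"
      using Am spP unfolding p_def by (subst integral_scaleR_left) (auto simp: P.emeasure_eq_measure)
    also have "p *\<^sub>R w = z - E" using p0 by (simp add: w_def)
    finally have "integral\<^sup>L (completion P) Y' = z" unfolding E_def by simp
    moreover have "absolutely_continuous P P" unfolding absolutely_continuous_def by simp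
    moreover have "dominated_by P \<P>" unfolding dominated_by_def absolutely_continuous_def using PP by auto
    ultimately show "z \<in> Theta \<P> K P" unfolding Theta_def using Pp Y'L by blast
  qed
  hence "ball E (p * \<rho> n0) \<subseteq> interior (Theta \<P> K P)" by (intro interior_maximal) auto
  moreover have "E \<in> ball E (p * \<rho> n0)" using p0 \<rho>0[of n0] by simp
  ultimately show ?thesis by blast
qed

theorem lemma3p2:
  fixes \<P> :: "('a::polish_space) measure set"
    and K :: "'a \<Rightarrow> (real ^ 'd) set"
    and P :: "'a measure"
  assumes P_ne: "\<P> \<noteq> {}"
    and P_convex: "convex_measures \<P>"
    and P_analytic: "analytic_measures \<P>"
    and K_closed: "\<And>\<omega>. closed (K \<omega>)"
    and K_cone: "\<And>\<omega>. convex_cone (K \<omega>)"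
    and K_orthant: "\<And>\<omega>. nonneg_orthant \<subseteq> K \<omega>"
    and K_meas: "borel_random_set K"
    and K_dual_bdry: "\<And>\<omega>. dual_cone (K \<omega>) \<inter> frontier nonneg_orthant = {0}"
    and K_dual_int: "\<And>\<omega>. interior (dual_cone (K \<omega>)) \<noteq> {}"
    and P_in: "P \<in> \<P>"
  shows "convex (Theta \<P> K P) \<and> interior (Theta \<P> K P) \<noteq> {}"
proof -
  have Pp: "\<P> \<subseteq> prob_measures" using P_analytic unfolding analytic_measures_def by blast
  show ?thesis using theta_convex[OF P_convex Pp] theta_interior[OF P_in Pp K_meas K_dual_int] by blast
qed

end
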